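(* Let $G$ be a group with finite generating set $S$. If $\textnormal{Geo}(G,S)$ is regular, then the geodesic skeleton subshift $X^g_{G,S}$ is sofic.
   Context: A word $w$ over $S\cup S^{-1}$ is geodesic if $|w|\le|v|$ for every word $v$ representing the same element of $G$; $\textnormal{Geo}(G,S)$ is the language of geodesic words. The skeleton subshift $X_{G,S}\subseteq(S\cup S^{-1})^{\mathbb{Z}}$ is the set of sequences none of whose non-empty finite factors represents $1_G$, and $X^g_{G,S}=\{x\in X_{G,S}\mid \text{every finite factor of }x\text{ is geodesic}\}$. A subshift over a finite alphabet is a set of bi-infinite sequences avoiding all words of a set $\mathcal F$ of forbidden finite words; it is sofic if $\mathcal F$ can be chosen to be a regular language. *)

theory Defs
  imports "HOL-Algebra.Generated_Groups"
begin

text \<open>Letters of the alphabet S \<union> S^-1: (s, False) stands for s, (s, True) for s^-1.\<close>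
type_synonym 'a letter = "'a \<times> bool"

definition alphabet :: "'a set \<Rightarrow> 'a letter set" where
  "alphabet S = S \<times> (UNIV :: bool set)"

definition letter_eval :: "('a, 'b) monoid_scheme \<Rightarrow> 'a letter \<Rightarrow> 'a" where
  "letter_eval G l = (if snd l then inv\<^bsub>G\<^esub> (fst l) else fst l)"

definition word_eval :: "('a, 'b) monoid_scheme \<Rightarrow> 'a letter list \<Rightarrow> 'a" where
  "word_eval G w = foldr (\<lambda>l g. letter_eval G l \<otimes>\<^bsub>G\<^esub> g) w \<one>\<^bsub>G\<^esub>"

definition Geo :: "('a, 'b) monoid_scheme \<Rightarrow> 'a set \<Rightarrow> 'a letter list set" where
  "Geo G S = {w \<in> lists (alphabet S).
      \<forall>v \<in> lists (alphabet S). word_eval G v = word_eval G w \<longrightarrow> length w \<le> length v}"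

definition regular_lang :: "'c set \<Rightarrow> 'c list set \<Rightarrow> bool" where
  "regular_lang A L \<longleftrightarrow> L \<subseteq> lists A \<and>
     (\<exists>(Q :: nat set) q0 (\<delta> :: nat \<Rightarrow> 'c \<Rightarrow> nat) F.
        finite Q \<and> q0 \<in> Q \<and> (\<forall>q\<in>Q. \<forall>a\<in>A. \<delta> q a \<in> Q) \<and> F \<subseteq> Q \<and>
        (\<forall>w \<in> lists A. w \<in> L \<longleftrightarrow> foldl \<delta> q0 w \<in> F))"

definition factor :: "(int \<Rightarrow> 'c) \<Rightarrow> int \<Rightarrow> nat \<Rightarrow> 'c list" where
  "factor x i n = map (\<lambda>k. x (i + int k)) [0..<n]"

definition full_shift :: "'c set \<Rightarrow> (int \<Rightarrow> 'c) set" where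
  "full_shift A = {x. \<forall>i. x i \<in> A}"

definition shift_of_forbidden :: "'c set \<Rightarrow> 'c list set \<Rightarrow> (int \<Rightarrow> 'c) set" where
  "shift_of_forbidden A F = {x \<in> full_shift A. \<forall>i n. factor x i n \<notin> F}"

definition sofic :: "'c set \<Rightarrow> (int \<Rightarrow> 'c) set \<Rightarrow> bool" where
  "sofic A X \<longleftrightarrow> (\<exists>F. regular_lang A F \<and> X = shift_of_forbidden A F)"

definition skeleton :: "('a, 'b) monoid_scheme \<Rightarrow> 'a set \<Rightarrow> (int \<Rightarrow> 'a letter) set" where
  "skeleton G S = {x \<in> full_shift (alphabet S).
      \<forall>i n. n > 0 \<longrightarrow> word_eval G (factor x i n) \<noteq> \<one>\<^bsub>G\<^esub>}"

definition geo_skeleton :: "('a, 'b) monoid_scheme \<Rightarrow> 'a set \<Rightarrow> (int \<Rightarrow> 'a letter) set" where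
  "geo_skeleton G S = {x \<in> skeleton G S. \<forall>i n. factor x i n \<in> Geo G S}"

end

theory Submission
  imports Defs
begin

lemma foldl_in_Q:
  assumes "\<forall>q\<in>Q. \<forall>a\<in>A. \<delta> q a \<in> Q"
  shows "q \<in> Q \<Longrightarrow> w \<in> lists A \<Longrightarrow> foldl \<delta> q w \<in> Q"
  using assms by (induction w arbitrary: q) auto

lemma regular_compl:
  assumes "regular_lang A L"
  shows "regular_lang A (lists A - L)"
proof -
  from assms obtain Q q0 \<delta> F where h: "finite (Q :: nat set)" "q0 \<in> Q"
    "\<forall>q\<in>Q. \<forall>a\<in>A. \<delta> q a \<in> Q" "F \<subseteq> Q"
    "\<forall>w \<in> lists A. w \<in> L \<longleftrightarrow> foldl \<delta> q0 w \<in> F"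
    unfolding regular_lang_def by blast
  have "\<forall>w \<in> lists A. w \<in> lists A - L \<longleftrightarrow> foldl \<delta> q0 w \<in> Q - F"
    using h foldl_in_Q[OF h(3) h(2)] by blast
  then show ?thesis unfolding regular_lang_def using h
    by (intro conjI exI[of _ Q] exI[of _ q0] exI[of _ \<delta>] exI[of _ "Q - F"]) auto
qed

lemma factor_lists: "x \<in> full_shift A \<Longrightarrow> factor x i n \<in> lists A"
  unfolding factor_def full_shift_def by auto

theorem proposition6:
  fixes G :: "('a, 'b) monoid_scheme" and S :: "'a set"
  assumes "group G"
    and "finite S" and "S \<subseteq> carrier G" and "generate G S = carrier G"
    and "regular_lang (alphabet S) (Geo G S)"
  shows "sofic (alphabet S) (geo_skeleton G S)"
  unfolding sofic_def
proof (intro exI conjI)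
  let ?A = "alphabet S"
  show "regular_lang ?A (lists ?A - Geo G S)" using regular_compl[OF assms(5)] .
  show "geo_skeleton G S = shift_of_forbidden ?A (lists ?A - Geo G S)"
  proof
    show "geo_skeleton G S \<subseteq> shift_of_forbidden ?A (lists ?A - Geo G S)"
      unfolding geo_skeleton_def skeleton_def shift_of_forbidden_def by auto
  next
    show "shift_of_forbidden ?A (lists ?A - Geo G S) \<subseteq> geo_skeleton G S"
    proof
      fix x assume x: "x \<in> shift_of_forbidden ?A (lists ?A - Geo G S)"
      then have fs: "x \<in> full_shift ?A" and g: "\<And>i n. factor x i n \<in> Geo G S"
        unfolding shift_of_forbidden_def using factor_lists by blast+
      have "word_eval G (factor x i n) \<noteq> \<one>\<^bsub>G\<^esub>" if "n > 0" for i n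
      proof
        assume e: "word_eval G (factor x i n) = \<one>\<^bsub>G\<^esub>"
        have "word_eval G [] = \<one>\<^bsub>G\<^esub>" by (simp add: word_eval_def)
        then have "length (factor x i n) \<le> length ([] :: 'a letter list)"
          using g[of i n] e unfolding Geo_def by auto
        then show False using that by (simp add: factor_def)
      qed
      then show "x \<in> geo_skeleton G S"
        unfolding geo_skeleton_def skeleton_def using fs g by auto
    qed
  qed
qed

end
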